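(* Let $\mu,\sigma>0$, $T>0$, $K\in\mathbb{N}$ and $\Gamma>0$ satisfy $\mu\sqrt{kT/K}/\sigma\le\Gamma$ for all $k\in\{1,\dots,K\}$. Let \[\mathcal{U}_1=\Big\{r\in\mathbb{R}^K:\Big|\tfrac{\sum_{\ell=1}^k\log(1+r_\ell)-\mu kT/K}{\sigma\sqrt{kT/K}}\Big|\le\Gamma,\ \forall k\in\{1,\dots,K\}\Big\},\] \[\mathcal{W}=\Big\{r\in\mathbb{R}^K:\max_{k'\in\{k+1,\dots,K\}}\Big|\tfrac{\sum_{\ell=1}^k\log(1+r_\ell)-\mu k'T/K}{\sigma\sqrt{k'T/K}}\Big|-\Gamma\le0,\ \forall k\in\{1,\dots,K\}\Big\},\] and $\mathcal{U}'_1=\mathcal{U}_1\cap\mathcal{W}$. Then the worst-case risk measure $\rho$ using the uncertainty set $\mathcal{U}'_1$ satisfies both the bounded market risk assumption and the bounded conditional market risk assumption.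
   Context: Returns $r=(r_1,\dots,r_K)$ of a risky asset on $\Omega=\mathbb{R}^K$ (Borel $\sigma$-algebra, natural filtration $\mathcal{F}_k=\sigma(r_1,\dots,r_k)$); wealth from investing amounts $\zeta_k$ ($\mathcal{F}_k$-measurable) in the risky asset is $X_k=p_0+\sum_{k'=0}^{k-1}\zeta_{k'}r_{k'+1}$, zero interest rate. For an uncertainty set $\mathcal{U}\subseteq\mathbb{R}^K$, the worst-case risk measure is $\rho(X)=\sup_{r\in\mathcal{U}}X(r)$, with one-step decomposition $\rho=\rho_0\circ\cdots\circ\rho_{K-1}$, where $\rho_k(X,r)=\sup_{r'\in\mathcal{U}:r'_{1:k}=r_{1:k}}X(r')$ if some $r'\in\mathcal{U}$ has $r'_{1:k}=r_{1:k}$, and otherwise $\rho_k(X,r)=X([r_{1:k};0_{k+1:K}])$ (understood as $\inf_{\epsilon>0}\operatorname{ess\,sup}$ over $r'$ with $r'_{1:k}=r_{1:k}$, $\|r'_{k+1:K}\|_\infty\le\epsilon$). Let $\rho_{k,K}=\rho_k\circ\cdots\circ\rho_{K-1}$. Bounded market risk: $0\ge\inf_{\zeta}\rho(-\sum_{k=0}^{K-1}\zeta_kr_{k+1})>-\infty$ (for coherent $\rho$ equivalently $=0$). Bounded conditional market risk: for each $k\in\{0,\dots,K-1\}$, $0\ge\inf_{\zeta_k,\dots,\zeta_{K-1}}\rho_{k,K}(-\sum_{\ell=k}^{K-1}\zeta_\ell r_{\ell+1})>-\infty$ a.s. (equal to $0$ when the conditional mappings are scale invariant, as here). *)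

theory Defs
  imports "HOL-Analysis.Analysis"
begin

text \<open>Returns r = (r_1,...,r_K) are modelled as functions nat => real; the sample
space Omega = R^K is the set of such functions vanishing outside {1..K}.\<close>

definition Omega :: "nat \<Rightarrow> (nat \<Rightarrow> real) set" where
  "Omega K = {r. \<forall>i. i \<notin> {1..K} \<longrightarrow> r i = 0}"

definition trunc :: "nat \<Rightarrow> (nat \<Rightarrow> real) \<Rightarrow> (nat \<Rightarrow> real)" where
  "trunc k r = (\<lambda>i. if i \<in> {1..k} then r i else 0)"

text \<open>A strategy zeta = (zeta_0,...,zeta_{K-1}) is adapted: zeta_l is
sigma(r_1..r_l)-measurable, i.e. a Borel function of the first l returns.\<close>
definition adapted :: "nat \<Rightarrow> (nat \<Rightarrow> (nat \<Rightarrow> real) \<Rightarrow> real) \<Rightarrow> bool" where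
  "adapted K \<zeta> \<longleftrightarrow>
     (\<forall>l<K. \<exists>g \<in> borel_measurable (borel :: (nat \<Rightarrow> real) measure).
        \<forall>r. \<zeta> l r = g (trunc l r))"

definition gains :: "(nat \<Rightarrow> (nat \<Rightarrow> real) \<Rightarrow> real) \<Rightarrow> nat \<Rightarrow> nat \<Rightarrow> (nat \<Rightarrow> real) \<Rightarrow> real" where
  "gains \<zeta> k K r = (\<Sum>l\<in>{k..<K}. \<zeta> l r * r (Suc l))"

definition rho_wc :: "(nat \<Rightarrow> real) set \<Rightarrow> ((nat \<Rightarrow> real) \<Rightarrow> ereal) \<Rightarrow> ereal" where
  "rho_wc U X = (SUP r\<in>U. X r)"

definition rho_step :: "(nat \<Rightarrow> real) set \<Rightarrow> nat \<Rightarrow> ((nat \<Rightarrow> real) \<Rightarrow> ereal) \<Rightarrow> (nat \<Rightarrow> real) \<Rightarrow> ereal" where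
  "rho_step U k X r =
     (if \<exists>r'\<in>U. \<forall>i\<in>{1..k}. r' i = r i
      then (SUP r'\<in>{r'\<in>U. \<forall>i\<in>{1..k}. r' i = r i}. X r')
      else X (trunc k r))"

definition rho_comp :: "(nat \<Rightarrow> real) set \<Rightarrow> nat \<Rightarrow> nat \<Rightarrow> ((nat \<Rightarrow> real) \<Rightarrow> ereal) \<Rightarrow> (nat \<Rightarrow> real) \<Rightarrow> ereal" where
  "rho_comp U k K X = foldr (\<lambda>j Y. rho_step U j Y) [k..<K] X"

definition bounded_market_risk :: "(nat \<Rightarrow> real) set \<Rightarrow> nat \<Rightarrow> bool" where
  "bounded_market_risk U K \<longleftrightarrow>
     (let I = (INF \<zeta>\<in>{\<zeta>. adapted K \<zeta>}. rho_wc U (\<lambda>r. ereal (- gains \<zeta> 0 K r)))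
      in I \<le> 0 \<and> - \<infinity> < I)"

definition bounded_cond_market_risk :: "(nat \<Rightarrow> real) set \<Rightarrow> nat \<Rightarrow> bool" where
  "bounded_cond_market_risk U K \<longleftrightarrow>
     (\<forall>k<K. \<forall>r\<in>Omega K.
        (let I = (INF \<zeta>\<in>{\<zeta>. adapted K \<zeta>}. rho_comp U k K (\<lambda>r'. ereal (- gains \<zeta> k K r')) r)
         in I \<le> 0 \<and> - \<infinity> < I))"

definition logsum :: "(nat \<Rightarrow> real) \<Rightarrow> nat \<Rightarrow> real" where
  "logsum r k = (\<Sum>l=1..k. ln (1 + r l))"

definition U1 :: "real \<Rightarrow> real \<Rightarrow> real \<Rightarrow> nat \<Rightarrow> real \<Rightarrow> (nat \<Rightarrow> real) set" where
  "U1 \<mu> \<sigma> T K \<Gamma> = {r \<in> Omega K. (\<forall>l\<in>{1..K}. 1 + r l > 0) \<and>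
     (\<forall>k\<in>{1..K}. \<bar>(logsum r k - \<mu> * real k * T / real K) / (\<sigma> * sqrt (real k * T / real K))\<bar> \<le> \<Gamma>)}"

text \<open>max over k' in {k+1..K} of |...| - Gamma <= 0 (vacuous for k = K),
written out as a bound for every k'.\<close>
definition W :: "real \<Rightarrow> real \<Rightarrow> real \<Rightarrow> nat \<Rightarrow> real \<Rightarrow> (nat \<Rightarrow> real) set" where
  "W \<mu> \<sigma> T K \<Gamma> = {r \<in> Omega K. (\<forall>l\<in>{1..K}. 1 + r l > 0) \<and>
     (\<forall>k\<in>{1..K}. \<forall>k'\<in>{k+1..K}.
        \<bar>(logsum r k - \<mu> * real k' * T / real K) / (\<sigma> * sqrt (real k' * T / real K))\<bar> - \<Gamma> \<le> 0)}"

end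

theory Submission
  imports Defs
begin

lemma keyA:
  fixes \<mu> \<sigma> T \<Gamma> :: real and K k :: nat
  assumes "\<mu> > 0" and "\<sigma> > 0" and "T > 0" and "k \<in> {1..K}"
    and "\<mu> * sqrt (real k * T / real K) / \<sigma> \<le> \<Gamma>"
  shows "\<bar>(0 - \<mu> * real k * T / real K) / (\<sigma> * sqrt (real k * T / real K))\<bar> \<le> \<Gamma>"
proof -
  define x where "x = real k * T / real K"
  have xp: "x > 0" using assms by (auto simp: x_def)
  have s: "sqrt x * sqrt x = x" using xp by simp
  have sp: "sqrt x > 0" using xp by simp
  have e: "\<mu> * real k * T / real K = \<mu> * x" by (simp add: x_def)
  have "(0 - \<mu> * x) / (\<sigma> * sqrt x) = - (\<mu> * sqrt x / \<sigma>)"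
    using sp assms(2) s by (simp add: field_simps)
  moreover have "\<mu> * sqrt x / \<sigma> \<ge> 0" using assms sp by simp
  ultimately show ?thesis using assms(5) e by (simp add: x_def)
qed

lemma logsum_trunc: "logsum (trunc j r) m = logsum r (min j m)"
proof -
  have "logsum (trunc j r) m = (\<Sum>l=1..m. if l \<le> j then ln (1 + r l) else 0)"
    unfolding logsum_def trunc_def by (intro sum.cong) auto
  also have "\<dots> = (\<Sum>l\<in>{1..m} \<inter> {l. l \<le> j}. ln (1 + r l))"
    by (simp add: sum.inter_restrict)
  also have "{1..m} \<inter> {l. l \<le> j} = {1..min j m}" by auto
  finally show ?thesis by (simp add: logsum_def)
qed

lemma trunc_closed:
  fixes \<mu> \<sigma> T \<Gamma> :: real and K :: nat
  assumes "\<mu> > 0" and "\<sigma> > 0" and "T > 0" and "\<Gamma> > 0"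
    and H: "\<forall>k\<in>{1..K}. \<mu> * sqrt (real k * T / real K) / \<sigma> \<le> \<Gamma>"
    and r: "r \<in> U1 \<mu> \<sigma> T K \<Gamma> \<inter> W \<mu> \<sigma> T K \<Gamma>"
  shows "trunc j r \<in> U1 \<mu> \<sigma> T K \<Gamma> \<inter> W \<mu> \<sigma> T K \<Gamma>"
proof -
  have rO: "r \<in> Omega K" and rp: "\<forall>l\<in>{1..K}. 1 + r l > 0"
    and rU: "\<forall>k\<in>{1..K}. \<bar>(logsum r k - \<mu> * real k * T / real K) / (\<sigma> * sqrt (real k * T / real K))\<bar> \<le> \<Gamma>"
    and rW: "\<forall>k\<in>{1..K}. \<forall>k'\<in>{k+1..K}.
        \<bar>(logsum r k - \<mu> * real k' * T / real K) / (\<sigma> * sqrt (real k' * T / real K))\<bar> - \<Gamma> \<le> 0"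
    using r by (auto simp: U1_def W_def)
  have main: "\<bar>(logsum r j - \<mu> * real k' * T / real K) / (\<sigma> * sqrt (real k' * T / real K))\<bar> \<le> \<Gamma>"
    if "j < k'" "k' \<in> {1..K}" for k'
  proof (cases "j = 0")
    case True
    then have "logsum r j = 0" by (simp add: logsum_def)
    then show ?thesis using keyA[OF assms(1-3) that(2)] H that by simp
  next
    case False
    then have "j \<in> {1..K}" "k' \<in> {j+1..K}" using that by auto
    then show ?thesis using rW by fastforce
  qed
  have tO: "trunc j r \<in> Omega K" using rO by (auto simp: Omega_def trunc_def)
  have tp: "\<forall>l\<in>{1..K}. 1 + trunc j r l > 0" using rp by (auto simp: trunc_def)
  have tU: "\<forall>k\<in>{1..K}. \<bar>(logsum (trunc j r) k - \<mu> * real k * T / real K) / (\<sigma> * sqrt (real k * T / real K))\<bar> \<le> \<Gamma>"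
  proof
    fix k assume k: "k \<in> {1..K}"
    show "\<bar>(logsum (trunc j r) k - \<mu> * real k * T / real K) / (\<sigma> * sqrt (real k * T / real K))\<bar> \<le> \<Gamma>"
    proof (cases "k \<le> j")
      case True then show ?thesis using rU k by (simp add: logsum_trunc min_def)
    next
      case False then show ?thesis using main[of k] k by (simp add: logsum_trunc min_def)
    qed
  qed
  have tW: "\<forall>k\<in>{1..K}. \<forall>k'\<in>{k+1..K}.
        \<bar>(logsum (trunc j r) k - \<mu> * real k' * T / real K) / (\<sigma> * sqrt (real k' * T / real K))\<bar> - \<Gamma> \<le> 0"
  proof (intro ballI)
    fix k k' assume k: "k \<in> {1..K}" and k': "k' \<in> {k+1..K}"
    show "\<bar>(logsum (trunc j r) k - \<mu> * real k' * T / real K) / (\<sigma> * sqrt (real k' * T / real K))\<bar> - \<Gamma> \<le> 0"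
    proof (cases "k \<le> j")
      case True then show ?thesis using rW k k' by (simp add: logsum_trunc min_def)
    next
      case False then show ?thesis using main[of k'] k k' by (simp add: logsum_trunc min_def)
    qed
  qed
  show ?thesis using tO tp tU tW by (simp add: U1_def W_def)
qed

lemma zero_in:
  fixes \<mu> \<sigma> T \<Gamma> :: real and K :: nat
  assumes "\<mu> > 0" and "\<sigma> > 0" and "T > 0" and "\<Gamma> > 0"
    and H: "\<forall>k\<in>{1..K}. \<mu> * sqrt (real k * T / real K) / \<sigma> \<le> \<Gamma>"
  shows "(\<lambda>_. 0) \<in> U1 \<mu> \<sigma> T K \<Gamma> \<inter> W \<mu> \<sigma> T K \<Gamma>"
proof -
  have l: "logsum (\<lambda>_. 0) k = 0" for k by (simp add: logsum_def)
  have A: "\<forall>k\<in>{1..K}. \<bar>(0 - \<mu> * real k * T / real K) / (\<sigma> * sqrt (real k * T / real K))\<bar> \<le> \<Gamma>"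
    using keyA[OF assms(1-3)] H by blast
  have B: "\<forall>k\<in>{1..K}. \<forall>k'\<in>{k+1..K}. \<bar>(0 - \<mu> * real k' * T / real K) / (\<sigma> * sqrt (real k' * T / real K))\<bar> - \<Gamma> \<le> 0"
    using A by force
  have A': "\<forall>k\<in>{1..K}. \<bar>(logsum (\<lambda>_. 0) k - \<mu> * real k * T / real K) / (\<sigma> * sqrt (real k * T / real K))\<bar> \<le> \<Gamma>"
    unfolding l using A .
  have B': "\<forall>k\<in>{1..K}. \<forall>k'\<in>{k+1..K}. \<bar>(logsum (\<lambda>_. 0) k - \<mu> * real k' * T / real K) / (\<sigma> * sqrt (real k' * T / real K))\<bar> - \<Gamma> \<le> 0"
    unfolding l using B .
  have O: "(\<lambda>_. 0) \<in> Omega K" by (simp add: Omega_def)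
  show ?thesis
    unfolding U1_def W_def using A' B' O by simp
qed

lemma rho_comp_zero: "foldr (\<lambda>j Y. rho_step U j Y) js (\<lambda>_. 0) r \<le> 0"
proof (induction js arbitrary: r)
  case Nil then show ?case by simp
next
  case (Cons j js)
  then show ?case by (simp add: rho_step_def SUP_le_iff)
qed

lemma rho_comp_lower:
  assumes clos: "\<And>r j. r \<in> U \<Longrightarrow> trunc j r \<in> U"
    and kj: "k \<le> j" "j \<le> K"
  shows "\<forall>r. (\<forall>i. k < i \<and> i \<le> j \<longrightarrow> r i = 0) \<longrightarrow>
     rho_comp U j K (\<lambda>r'. ereal (- gains \<zeta> k K r')) r \<ge> 0"
  using kj(2)
proof (induction j rule: inc_induct)
  case base
  show ?case
  proof (intro allI impI)
    fix r :: "nat \<Rightarrow> real" assume h: "\<forall>i. k < i \<and> i \<le> K \<longrightarrow> r i = 0"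
    have "gains \<zeta> k K r = 0" unfolding gains_def using h by (intro sum.neutral) auto
    then show "rho_comp U K K (\<lambda>r'. ereal (- gains \<zeta> k K r')) r \<ge> 0"
      by (simp add: rho_comp_def)
  qed
next
  case (step n)
  show ?case
  proof (intro allI impI)
    fix r :: "nat \<Rightarrow> real" assume h: "\<forall>i. k < i \<and> i \<le> n \<longrightarrow> r i = 0"
    define Y where "Y = rho_comp U (Suc n) K (\<lambda>r'. ereal (- gains \<zeta> k K r'))"
    have eq: "rho_comp U n K (\<lambda>r'. ereal (- gains \<zeta> k K r')) r = rho_step U n Y r"
      using step(2) by (simp add: rho_comp_def Y_def upt_conv_Cons)
    show "rho_comp U n K (\<lambda>r'. ereal (- gains \<zeta> k K r')) r \<ge> 0"
    proof (cases "\<exists>r'\<in>U. \<forall>i\<in>{1..n}. r' i = r i")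
      case True
      then obtain r' where r': "r' \<in> U" "\<forall>i\<in>{1..n}. r' i = r i" by blast
      have t: "trunc n r' \<in> {r'\<in>U. \<forall>i\<in>{1..n}. r' i = r i}"
        using clos[OF r'(1)] r'(2) by (auto simp: trunc_def)
      have "\<forall>i. k < i \<and> i \<le> Suc n \<longrightarrow> trunc n r' i = 0"
        using h r'(2) by (auto simp: trunc_def)
      then have "Y (trunc n r') \<ge> 0" using step(3) by (simp add: Y_def)
      also have "Y (trunc n r') \<le> (SUP r'\<in>{r'\<in>U. \<forall>i\<in>{1..n}. r' i = r i}. Y r')"
        using t by (rule SUP_upper)
      finally show ?thesis using eq True by (simp add: rho_step_def)
    next
      case False
      have "\<forall>i. k < i \<and> i \<le> Suc n \<longrightarrow> trunc n r i = 0"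
        using h by (auto simp: trunc_def)
      then have "Y (trunc n r) \<ge> 0" using step(3) by (simp add: Y_def)
      have "rho_step U n Y r = Y (trunc n r)"
        unfolding rho_step_def by (rule if_not_P[OF False])
      then show ?thesis using eq \<open>Y (trunc n r) \<ge> 0\<close> by simp
    qed
  qed
qed

lemma ge0_gt_minf: "(0::ereal) \<le> x \<Longrightarrow> - \<infinity> < x" by (cases x) auto

lemma adapted_zero: "adapted K (\<lambda>l r. 0)"
  unfolding adapted_def by (auto intro!: bexI[of _ "\<lambda>_. 0"])

theorem lemma5:
  fixes \<mu> \<sigma> T \<Gamma> :: real and K :: nat
  assumes "\<mu> > 0" and "\<sigma> > 0" and "T > 0" and "\<Gamma> > 0"
    and "\<forall>k\<in>{1..K}. \<mu> * sqrt (real k * T / real K) / \<sigma> \<le> \<Gamma>"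
  shows "bounded_market_risk (U1 \<mu> \<sigma> T K \<Gamma> \<inter> W \<mu> \<sigma> T K \<Gamma>) K
       \<and> bounded_cond_market_risk (U1 \<mu> \<sigma> T K \<Gamma> \<inter> W \<mu> \<sigma> T K \<Gamma>) K"
proof
  let ?U = "U1 \<mu> \<sigma> T K \<Gamma> \<inter> W \<mu> \<sigma> T K \<Gamma>"
  have z: "(\<lambda>_. 0) \<in> ?U" by (rule zero_in[OF assms])
  have clos: "\<And>r j. r \<in> ?U \<Longrightarrow> trunc j r \<in> ?U" by (rule trunc_closed[OF assms])
  show "bounded_market_risk ?U K"
    unfolding bounded_market_risk_def Let_def
  proof
    have "(INF \<zeta>\<in>{\<zeta>. adapted K \<zeta>}. rho_wc ?U (\<lambda>r. ereal (- gains \<zeta> 0 K r)))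
        \<le> rho_wc ?U (\<lambda>r. ereal (- gains (\<lambda>l r. 0) 0 K r))"
      using adapted_zero by (intro INF_lower) auto
    also have "\<dots> \<le> 0" by (simp add: rho_wc_def gains_def SUP_le_iff)
    finally show "(INF \<zeta>\<in>{\<zeta>. adapted K \<zeta>}. rho_wc ?U (\<lambda>r. ereal (- gains \<zeta> 0 K r))) \<le> 0" .
  next
    have "0 \<le> (INF \<zeta>\<in>{\<zeta>. adapted K \<zeta>}. rho_wc ?U (\<lambda>r. ereal (- gains \<zeta> 0 K r)))"
    proof (rule INF_greatest)
      fix \<zeta> assume "\<zeta> \<in> {\<zeta>. adapted K \<zeta>}"
      have "ereal (- gains \<zeta> 0 K (\<lambda>_. 0)) \<le> rho_wc ?U (\<lambda>r. ereal (- gains \<zeta> 0 K r))"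
        unfolding rho_wc_def using z by (rule SUP_upper)
      then show "0 \<le> rho_wc ?U (\<lambda>r. ereal (- gains \<zeta> 0 K r))" by (simp add: gains_def zero_ereal_def)
    qed
    then show "- \<infinity> < (INF \<zeta>\<in>{\<zeta>. adapted K \<zeta>}. rho_wc ?U (\<lambda>r. ereal (- gains \<zeta> 0 K r)))"
      by (rule ge0_gt_minf)
  qed
  show "bounded_cond_market_risk ?U K"
    unfolding bounded_cond_market_risk_def Let_def
  proof (intro allI impI ballI conjI)
    fix k r assume k: "k < K" and r: "r \<in> Omega K"
    have "(INF \<zeta>\<in>{\<zeta>. adapted K \<zeta>}. rho_comp ?U k K (\<lambda>r'. ereal (- gains \<zeta> k K r')) r)
        \<le> rho_comp ?U k K (\<lambda>r'. ereal (- gains (\<lambda>l r. 0) k K r')) r"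
      using adapted_zero by (intro INF_lower) auto
    also have "\<dots> \<le> 0" using rho_comp_zero[of ?U "[k..<K]" r]
      by (simp add: rho_comp_def gains_def zero_ereal_def)
    finally show "(INF \<zeta>\<in>{\<zeta>. adapted K \<zeta>}. rho_comp ?U k K (\<lambda>r'. ereal (- gains \<zeta> k K r')) r) \<le> 0" .
    have "0 \<le> (INF \<zeta>\<in>{\<zeta>. adapted K \<zeta>}. rho_comp ?U k K (\<lambda>r'. ereal (- gains \<zeta> k K r')) r)"
    proof (rule INF_greatest)
      fix \<zeta> assume "\<zeta> \<in> {\<zeta>. adapted K \<zeta>}"
      show "0 \<le> rho_comp ?U k K (\<lambda>r'. ereal (- gains \<zeta> k K r')) r"
        using rho_comp_lower[of ?U k k K \<zeta>] clos k by auto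
    qed
    then show "- \<infinity> < (INF \<zeta>\<in>{\<zeta>. adapted K \<zeta>}. rho_comp ?U k K (\<lambda>r'. ereal (- gains \<zeta> k K r')) r)"
      by (rule ge0_gt_minf)
  qed
qed

end
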